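(* Let $G$ be a finite multigraph (no loops), let $\ell \geq 4$ be an integer, let $s$ be a vertex of $G$, and let $A \subsetneq V(G)$ with $s \notin A$ be such that $\lambda_G(x,y) \geq \ell$ for any two distinct $x,y\in A$ and such that no edge of $G$ has both endvertices outside $A$. Let $F_1$ and $F_2$ be independent sets in $L(G,s,\tau_A)$ of sizes $r_1$ and $r_2$ respectively, and suppose there are dangerous sets $D_1$ and $D_2$ such that $F_i = \delta(\{s\}) \cap \delta(D_i)$ for $i=1,2$. Set $\alpha = |F_1 \cap F_2|$. If $\alpha > 0$, $r_1 > \alpha$, $r_2 > \alpha$, and $V(G) \setminus (D_1 \cup D_2 \cup \{s\})$ contains a vertex of $A$, then $r_1 + r_2 \leq \lfloor \deg(s)/2 \rfloor + 2$.
   Context: $\lambda_G(x,y)$ is the maximum number of pairwise edge-disjoint $x$–$y$ paths in $G$; $\delta(X)$ is the set of edges with exactly one endvertex in $X$. Lifting two distinct edges $sx,sy$ means deleting them and adding a new edge $xy$. The target function $\tau_A$ assigns $\ell$ to pairs of vertices both in $A$ and $0$ otherwise; a pair of edges at $s$ is $\tau_A$-admissible if after lifting them the new graph $G'$ satisfies $\lambda_{G'}(x,y)\ge\tau_A(x,y)$ for all distinct $x,y\in V(G)\setminus\{s\}$. The lifting graph $L(G,s,\tau_A)$ has as vertices the edges incident with $s$, two being adjacent iff they form a $\tau_A$-admissible pair. A set $D \subseteq V(G)\setminus\{s\}$ is dangerous if both $D$ and $V(G)\setminus(D\cup\{s\})$ contain vertices of $A$ and $|\delta_G(D)| \leq \ell+1$.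 *)

theory Defs
  imports Main
begin

text \<open>Parallel edges are distinct identifiers with the same endpoints.\<close>

definition multigraph :: "'a set \<Rightarrow> 'e set \<Rightarrow> ('e \<Rightarrow> 'a set) \<Rightarrow> bool" where
  "multigraph V E ends \<longleftrightarrow> finite V \<and> finite E \<and>
     (\<forall>e\<in>E. ends e \<subseteq> V \<and> card (ends e) = 2)"

definition is_path :: "'a set \<Rightarrow> 'e set \<Rightarrow> ('e \<Rightarrow> 'a set) \<Rightarrow> 'a \<Rightarrow> 'a \<Rightarrow> 'e list \<Rightarrow> bool" where
  "is_path V E ends x y es \<longleftrightarrow> (\<exists>vs. length vs = Suc (length es) \<and> distinct vs \<and>
     set vs \<subseteq> V \<and> set es \<subseteq> E \<and> hd vs = x \<and> last vs = y \<and>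
     (\<forall>i<length es. ends (es ! i) = {vs ! i, vs ! Suc i}))"

definition edge_conn :: "'a set \<Rightarrow> 'e set \<Rightarrow> ('e \<Rightarrow> 'a set) \<Rightarrow> 'a \<Rightarrow> 'a \<Rightarrow> nat" where
  "edge_conn V E ends x y = (GREATEST k. \<exists>ps. length ps = k \<and>
     (\<forall>p\<in>set ps. is_path V E ends x y p) \<and>
     (\<forall>i<k. \<forall>j<k. i \<noteq> j \<longrightarrow> set (ps ! i) \<inter> set (ps ! j) = {}))"

definition cut :: "'e set \<Rightarrow> ('e \<Rightarrow> 'a set) \<Rightarrow> 'a set \<Rightarrow> 'e set" where
  "cut E ends X = {e \<in> E. card (ends e \<inter> X) = 1}"

definition degree :: "'e set \<Rightarrow> ('e \<Rightarrow> 'a set) \<Rightarrow> 'a \<Rightarrow> nat" where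
  "degree E ends s = card (cut E ends {s})"

definition other_end :: "('e \<Rightarrow> 'a set) \<Rightarrow> 'a \<Rightarrow> 'e \<Rightarrow> 'a" where
  "other_end ends s e = (THE v. ends e = {s, v})"

text \<open>Lifting the edges e1 = s x and e2 = s y: delete them and add a new edge x y.
  The resulting graph has edge identifiers of type 'e option: Some e for old edges,
  None for the new edge.\<close>

definition lift_edges :: "'e set \<Rightarrow> 'e \<Rightarrow> 'e \<Rightarrow> 'e option set" where
  "lift_edges E e1 e2 = insert None (Some ` (E - {e1, e2}))"

definition lift_ends :: "('e \<Rightarrow> 'a set) \<Rightarrow> 'a \<Rightarrow> 'e \<Rightarrow> 'e \<Rightarrow> 'e option \<Rightarrow> 'a set" where
  "lift_ends ends s e1 e2 f = (case f of None \<Rightarrow> {other_end ends s e1, other_end ends s e2}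
                                     | Some e \<Rightarrow> ends e)"

definition tau :: "'a set \<Rightarrow> nat \<Rightarrow> 'a \<Rightarrow> 'a \<Rightarrow> nat" where
  "tau A l x y = (if x \<in> A \<and> y \<in> A then l else 0)"

definition admissible ::
  "'a set \<Rightarrow> 'e set \<Rightarrow> ('e \<Rightarrow> 'a set) \<Rightarrow> 'a \<Rightarrow> 'a set \<Rightarrow> nat \<Rightarrow> 'e \<Rightarrow> 'e \<Rightarrow> bool" where
  "admissible V E ends s A l e1 e2 \<longleftrightarrow>
     e1 \<in> cut E ends {s} \<and> e2 \<in> cut E ends {s} \<and> e1 \<noteq> e2 \<and>
     (\<forall>x\<in>V - {s}. \<forall>y\<in>V - {s}. x \<noteq> y \<longrightarrow>
        edge_conn V (lift_edges E e1 e2) (lift_ends ends s e1 e2) x y \<ge> tau A l x y)"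

text \<open>Independent sets in the lifting graph L(G,s,tau_A), whose vertex set is
  delta({s}) and whose edges are the admissible pairs.\<close>

definition lifting_independent ::
  "'a set \<Rightarrow> 'e set \<Rightarrow> ('e \<Rightarrow> 'a set) \<Rightarrow> 'a \<Rightarrow> 'a set \<Rightarrow> nat \<Rightarrow> 'e set \<Rightarrow> bool" where
  "lifting_independent V E ends s A l F \<longleftrightarrow> F \<subseteq> cut E ends {s} \<and>
     (\<forall>e1\<in>F. \<forall>e2\<in>F. \<not> admissible V E ends s A l e1 e2)"

definition dangerous ::
  "'a set \<Rightarrow> 'e set \<Rightarrow> ('e \<Rightarrow> 'a set) \<Rightarrow> 'a \<Rightarrow> 'a set \<Rightarrow> nat \<Rightarrow> 'a set \<Rightarrow> bool" where
  "dangerous V E ends s A l D \<longleftrightarrow> D \<subseteq> V - {s} \<and> D \<inter> A \<noteq> {} \<and>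
     (V - (D \<union> {s})) \<inter> A \<noteq> {} \<and> card (cut E ends D) \<le> l + 1"

end

theory Submission
  imports Defs
begin

lemma ivt_nat: "P (0::nat) \<Longrightarrow> \<not> P n \<Longrightarrow> \<exists>i<n. P i \<and> \<not> P (Suc i)"
proof (induction n)
  case 0 then show ?case by simp
next
  case (Suc n)
  show ?case
  proof (cases "P n")
    case True then show ?thesis using Suc by auto
  next
    case False then obtain i where "i<n" "P i" "\<not> P (Suc i)" using Suc by auto
    then show ?thesis by (intro exI[of _ i]) auto
  qed
qed

lemma path_cross:
  assumes "is_path V E ends x y es" "x \<in> S" "y \<notin> S"
  shows "\<exists>e\<in>set es. e \<in> cut E ends S"
proof -
  obtain vs where vs: "length vs = Suc (length es)" "distinct vs" "set es \<subseteq> E"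
    "hd vs = x" "last vs = y" "\<forall>i<length es. ends (es ! i) = {vs ! i, vs ! Suc i}"
    using assms(1) unfolding is_path_def by blast
  have "vs ! 0 \<in> S" using vs assms by (metis hd_conv_nth list.size(3) nat.distinct(1))
  moreover have "vs ! length es \<notin> S" using vs assms
    by (metis last_conv_nth list.size(3) nat.distinct(1) diff_Suc_1)
  ultimately obtain i where i: "i < length es" "vs ! i \<in> S" "vs ! Suc i \<notin> S"
    using ivt_nat[of "\<lambda>i. vs ! i \<in> S"] by blast
  have ne: "vs ! i \<noteq> vs ! Suc i" using i by auto
  have "{vs ! i, vs ! Suc i} \<inter> S = {vs ! i}" using i by auto
  then have "card (ends (es ! i) \<inter> S) = 1" using vs(6) i(1) by simp
  moreover have "es ! i \<in> E" using vs(3) i(1) by auto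
  ultimately show ?thesis using i(1) unfolding cut_def by (intro bexI[of _ "es ! i"]) auto
qed

lemma edge_conn_le_cut:
  assumes G: "multigraph V E ends" and "x \<in> S" "y \<notin> S"
  shows "edge_conn V E ends x y \<le> card (cut E ends S)"
proof -
  let ?P = "\<lambda>k. \<exists>ps. length ps = k \<and>
     (\<forall>p\<in>set ps. is_path V E ends x y p) \<and>
     (\<forall>i<k. \<forall>j<k. i \<noteq> j \<longrightarrow> set (ps ! i) \<inter> set (ps ! j) = {})"
  have fin: "finite (cut E ends S)" using G unfolding multigraph_def cut_def by auto
  have bnd: "\<forall>k. ?P k \<longrightarrow> k \<le> card (cut E ends S)"
  proof (intro allI impI)
    fix k assume "?P k"
    then obtain ps where ps: "length ps = k" "\<forall>p\<in>set ps. is_path V E ends x y p"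
      "\<forall>i<k. \<forall>j<k. i \<noteq> j \<longrightarrow> set (ps ! i) \<inter> set (ps ! j) = {}" by blast
    have "\<forall>i\<in>{..<k}. \<exists>e. e \<in> set (ps ! i) \<and> e \<in> cut E ends S"
      using ps(1,2) path_cross assms(2,3) by (metis lessThan_iff nth_mem)
    then obtain f where f: "\<forall>i\<in>{..<k}. f i \<in> set (ps ! i) \<and> f i \<in> cut E ends S"
      by metis
    have "inj_on f {..<k}"
      unfolding inj_on_def using f ps(3) by (metis disjoint_iff lessThan_iff)
    moreover have "f ` {..<k} \<subseteq> cut E ends S" using f by auto
    ultimately have "card {..<k} \<le> card (cut E ends S)"
      using card_inj_on_le fin by blast
    then show "k \<le> card (cut E ends S)" by simp
  qed
  have "?P 0" by auto
  then have "?P (Greatest ?P)" using GreatestI_nat[of ?P 0] bnd by blast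
  then show ?thesis unfolding edge_conn_def using bnd by blast
qed

lemma card_filter_sum:
  "finite E \<Longrightarrow> int (card {e\<in>E. Q e}) = (\<Sum>e\<in>E. if Q e then 1 else 0)"
  by (simp add: sum.inter_filter[symmetric])

lemma card_pair_int: "u \<noteq> v \<Longrightarrow> (card ({u,v} \<inter> S) = 1) = ((u\<in>S) \<noteq> (v\<in>S))"
  by (cases "u \<in> S"; cases "v \<in> S") auto

lemma cut_iff:
  assumes "multigraph V E ends" "e \<in> E"
  obtains u v where "ends e = {u,v}" "u \<noteq> v"
    "\<And>S. card (ends e \<inter> S) = 1 \<longleftrightarrow> ((u\<in>S) \<noteq> (v\<in>S))"
proof -
  have "card (ends e) = 2" using assms unfolding multigraph_def by auto
  then obtain u v where uv: "ends e = {u,v}" "u \<noteq> v" by (meson card_2_iff)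
  then show ?thesis using that card_pair_int[OF uv(2)] by simp
qed

theorem lemma4p3:
  fixes V :: "'a set" and E :: "'e set" and ends :: "'e \<Rightarrow> 'a set"
    and l :: nat and s :: 'a and A :: "'a set"
    and F1 F2 :: "'e set" and D1 D2 :: "'a set"
  assumes G: "multigraph V E ends"
    and l: "l \<ge> 4"
    and s: "s \<in> V"
    and A: "A \<subset> V" "s \<notin> A"
    and conn: "\<forall>x\<in>A. \<forall>y\<in>A. x \<noteq> y \<longrightarrow> edge_conn V E ends x y \<ge> l"
    and noedge: "\<forall>e\<in>E. ends e \<inter> A \<noteq> {}"
    and F1: "lifting_independent V E ends s A l F1"
    and F2: "lifting_independent V E ends s A l F2"
    and D1: "dangerous V E ends s A l D1" "F1 = cut E ends {s} \<inter> cut E ends D1"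
    and D2: "dangerous V E ends s A l D2" "F2 = cut E ends {s} \<inter> cut E ends D2"
    and alpha: "card (F1 \<inter> F2) > 0"
    and r1: "card F1 > card (F1 \<inter> F2)"
    and r2: "card F2 > card (F1 \<inter> F2)"
    and out: "(V - (D1 \<union> D2 \<union> {s})) \<inter> A \<noteq> {}"
  shows "card F1 + card F2 \<le> degree E ends s div 2 + 2"
proof -
  have finE: "finite E" using G unfolding multigraph_def by auto
  have sD1: "s \<notin> D1" and sD2: "s \<notin> D2" using D1(1) D2(1) unfolding dangerous_def by auto
  have cD1: "card (cut E ends D1) \<le> l + 1" and cD2: "card (cut E ends D2) \<le> l + 1"
    using D1(1) D2(1) unfolding dangerous_def by auto
  obtain y where y: "y \<in> A" "y \<notin> D1" "y \<notin> D2" "y \<noteq> s" using out by auto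
  have lb: "l \<le> card (cut E ends S)" if "x \<in> S" "x \<in> A" "y \<notin> S" for S x
  proof -
    have "x \<noteq> y" using that by auto
    then have "l \<le> edge_conn V E ends x y" using conn that y by auto
    also have "\<dots> \<le> card (cut E ends S)" using edge_conn_le_cut[OF G that(1,3)] .
    finally show ?thesis .
  qed
  have endpt: "\<exists>w. w \<in> A \<and> (w \<in> D1 \<longleftrightarrow> e \<in> cut E ends D1) \<and> (w \<in> D2 \<longleftrightarrow> e \<in> cut E ends D2)"
    if "e \<in> cut E ends {s}" for e
  proof -
    have eE: "e \<in> E" using that unfolding cut_def by auto
    obtain u v where uv: "ends e = {u,v}" "u \<noteq> v"
      "\<And>S. card (ends e \<inter> S) = 1 \<longleftrightarrow> ((u\<in>S) \<noteq> (v\<in>S))" using cut_iff[OF G eE] by blast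
    have "ends e \<inter> A \<noteq> {}" using noedge eE by auto
    show ?thesis
    proof (cases "u = s")
      case True
      then have "v \<in> A" using uv \<open>ends e \<inter> A \<noteq> {}\<close> A(2) by auto
      then show ?thesis using True uv(3) eE sD1 sD2 unfolding cut_def by (intro exI[of _ v]) auto
    next
      case False
      have "card (ends e \<inter> {s}) = 1" using that unfolding cut_def by auto
      then have "v = s" using uv(3)[of "{s}"] False by auto
      then have "u \<in> A" using uv \<open>ends e \<inter> A \<noteq> {}\<close> A(2) by auto
      then show ?thesis using \<open>v = s\<close> False uv(3) eE sD1 sD2 unfolding cut_def by (intro exI[of _ u]) auto
    qed
  qed
  have finF: "finite F1" "finite F2" using D1(2) D2(2) finE unfolding cut_def by auto
  obtain e0 where "e0 \<in> F1 \<inter> F2" using alpha by (metis card.empty equals0I less_irrefl)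
  then obtain x where x: "x \<in> A" "x \<in> D1" "x \<in> D2"
    using endpt D1(2) D2(2) by blast
  obtain e1 where "e1 \<in> F1" "e1 \<notin> F2" using r1 finF
    by (metis Int_iff less_irrefl subsetI subset_antisym)
  then obtain a where a: "a \<in> A" "a \<in> D1" "a \<notin> D2"
    using endpt D1(2) D2(2) by blast
  obtain e2 where "e2 \<in> F2" "e2 \<notin> F1" using r2 finF
    by (metis Int_iff less_irrefl subsetI subset_antisym)
  then obtain b where b: "b \<in> A" "b \<notin> D1" "b \<in> D2"
    using endpt D1(2) D2(2) by blast
  have lX: "l \<le> card (cut E ends (D1 \<inter> D2))" using lb[of x] x y by auto
  have lY: "l \<le> card (cut E ends (D1 \<union> D2 \<union> {s}))" using lb[of x] x y by auto
  have la: "l \<le> card (cut E ends (D1 - D2))" using lb[of a] a y by auto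
  have lb': "l \<le> card (cut E ends (D2 - D1))" using lb[of b] b y by auto
  define I where "I S e = (if card (ends e \<inter> S) = 1 then 1 else 0 :: int)" for S e
  have cs: "int (card (cut E ends S)) = (\<Sum>e\<in>E. I S e)" for S
    unfolding cut_def I_def using card_filter_sum[OF finE] by simp
  have cF: "int (card (cut E ends {s} \<inter> cut E ends D)) = (\<Sum>e\<in>E. I {s} e * I D e)" for D
  proof -
    have "cut E ends {s} \<inter> cut E ends D = {e\<in>E. card (ends e \<inter> {s}) = 1 \<and> card (ends e \<inter> D) = 1}"
      unfolding cut_def by auto
    moreover have "(\<Sum>e\<in>E. I {s} e * I D e) = (\<Sum>e\<in>E. if card (ends e \<inter> {s}) = 1 \<and> card (ends e \<inter> D) = 1 then 1 else 0)"
      by (rule sum.cong) (auto simp: I_def)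
    ultimately show ?thesis using card_filter_sum[OF finE] by presburger
  qed
  have pw: "2 * (I {s} e * I D1 e) + 2 * (I {s} e * I D2 e) - I {s} e + I (D1 \<inter> D2) e
      + I (D1 \<union> D2 \<union> {s}) e + I (D1 - D2) e + I (D2 - D1) e \<le> 2 * I D1 e + 2 * I D2 e"
    if eE: "e \<in> E" for e
  proof -
    obtain u v where uv: "ends e = {u,v}" "u \<noteq> v"
      "\<And>S. card (ends e \<inter> S) = 1 \<longleftrightarrow> ((u\<in>S) \<noteq> (v\<in>S))" using cut_iff[OF G eE] by blast
    show ?thesis unfolding I_def uv(3) using uv(2) sD1 sD2
      by (cases "u = s"; cases "v = s"; cases "u \<in> D1"; cases "u \<in> D2"; cases "v \<in> D1"; cases "v \<in> D2") simp_all
  qed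
  have "(\<Sum>e\<in>E. 2 * (I {s} e * I D1 e) + 2 * (I {s} e * I D2 e) - I {s} e + I (D1 \<inter> D2) e
      + I (D1 \<union> D2 \<union> {s}) e + I (D1 - D2) e + I (D2 - D1) e) \<le> (\<Sum>e\<in>E. 2 * I D1 e + 2 * I D2 e)"
    using pw by (rule sum_mono)
  then have "2 * int (card F1) + 2 * int (card F2) - int (degree E ends s)
      + int (card (cut E ends (D1 \<inter> D2))) + int (card (cut E ends (D1 \<union> D2 \<union> {s})))
      + int (card (cut E ends (D1 - D2))) + int (card (cut E ends (D2 - D1)))
      \<le> 2 * int (card (cut E ends D1)) + 2 * int (card (cut E ends D2))"
    unfolding D1(2) D2(2) degree_def cF cs
    by (simp add: sum.distrib sum_subtractf sum_distrib_left)
  moreover have "int l \<le> int (card (cut E ends (D1 \<inter> D2)))" "int l \<le> int (card (cut E ends (D1 \<union> D2 \<union> {s})))"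
    "int l \<le> int (card (cut E ends (D1 - D2)))" "int l \<le> int (card (cut E ends (D2 - D1)))"
    "int (card (cut E ends D1)) \<le> int l + 1" "int (card (cut E ends D2)) \<le> int l + 1"
    using lX lY la lb' cD1 cD2 by simp_all
  ultimately have "int (2 * (card F1 + card F2)) \<le> int (degree E ends s + 4)"
    by simp
  then have "2 * (card F1 + card F2) \<le> degree E ends s + 4" by linarith
  then show ?thesis by presburger
qed

end
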